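(* For any finite, simple, connected graph $G$, if $\gamma_P(G)=1$, then $\gamma_P(G\,\Box\,P_2)\le 2$.
   Context: The Cartesian product $G\,\Box\,H$ has vertex set $V(G)\times V(H)$, with $(g,h)$ adjacent to $(g',h')$ iff either $g=g'$ and $hh'\in E(H)$, or $h=h'$ and $gg'\in E(G)$; $P_2$ is the path on two vertices. For $U\subseteq V$, $cl(U)$ is obtained by coloring $U$ black and repeatedly applying: if a black vertex has exactly one white neighbor, that neighbor becomes black. $S$ is a power dominating set if $cl(N[S])=V$; $\gamma_P$ is the minimum size of a power dominating set. *)

theory Defs
  imports Main
begin

definition simple_graph :: "'a set \<Rightarrow> ('a \<Rightarrow> 'a \<Rightarrow> bool) \<Rightarrow> bool" where
  "simple_graph V E \<longleftrightarrow> finite V \<and> (\<forall>x y. E x y \<longrightarrow> x \<in> V \<and> y \<in> V)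
     \<and> (\<forall>x y. E x y \<longrightarrow> E y x) \<and> (\<forall>x. \<not> E x x)"

definition connected_graph :: "'a set \<Rightarrow> ('a \<Rightarrow> 'a \<Rightarrow> bool) \<Rightarrow> bool" where
  "connected_graph V E \<longleftrightarrow> V \<noteq> {} \<and> (\<forall>x\<in>V. \<forall>y\<in>V. E\<^sup>*\<^sup>* x y)"

definition nbhd :: "('a \<Rightarrow> 'a \<Rightarrow> bool) \<Rightarrow> 'a \<Rightarrow> 'a set" where
  "nbhd E v = {w. E v w}"

definition closed_nbhd :: "('a \<Rightarrow> 'a \<Rightarrow> bool) \<Rightarrow> 'a set \<Rightarrow> 'a set" where
  "closed_nbhd E S = S \<union> {w. \<exists>v\<in>S. E v w}"

definition force_step :: "('a \<Rightarrow> 'a \<Rightarrow> bool) \<Rightarrow> 'a set \<Rightarrow> 'a set \<Rightarrow> bool" where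
  "force_step E B B' \<longleftrightarrow> (\<exists>v\<in>B. \<exists>w. nbhd E v - B = {w} \<and> B' = insert w B)"

text \<open>cl(U): all vertices that become black by repeatedly applying the rule
  starting from U (the rule only ever adds vertices; the result is the union of
  all reachable colourings).\<close>
definition cl :: "('a \<Rightarrow> 'a \<Rightarrow> bool) \<Rightarrow> 'a set \<Rightarrow> 'a set" where
  "cl E U = \<Union>{B. (force_step E)\<^sup>*\<^sup>* U B}"

definition power_dominating :: "'a set \<Rightarrow> ('a \<Rightarrow> 'a \<Rightarrow> bool) \<Rightarrow> 'a set \<Rightarrow> bool" where
  "power_dominating V E S \<longleftrightarrow> S \<subseteq> V \<and> cl E (closed_nbhd E S) = V"

definition power_domination_number :: "'a set \<Rightarrow> ('a \<Rightarrow> 'a \<Rightarrow> bool) \<Rightarrow> nat" where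
  "power_domination_number V E = (LEAST k. \<exists>S. power_dominating V E S \<and> card S = k)"

definition cart_prod_V :: "'a set \<Rightarrow> 'b set \<Rightarrow> ('a \<times> 'b) set" where
  "cart_prod_V VG VH = VG \<times> VH"

definition cart_prod_E :: "('a \<Rightarrow> 'a \<Rightarrow> bool) \<Rightarrow> ('b \<Rightarrow> 'b \<Rightarrow> bool) \<Rightarrow> ('a \<times> 'b) \<Rightarrow> ('a \<times> 'b) \<Rightarrow> bool" where
  "cart_prod_E EG EH p q \<longleftrightarrow>
     (fst p = fst q \<and> EH (snd p) (snd q)) \<or> (snd p = snd q \<and> EG (fst p) (fst q))"

definition P2_V :: "nat set" where "P2_V = {0, 1}"
definition P2_E :: "nat \<Rightarrow> nat \<Rightarrow> bool" where "P2_E a b \<longleftrightarrow> {a, b} = {0, 1}"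

end

theory Submission
  imports Defs
begin

lemma cl_sub:
  assumes "\<And>x y. E x y \<Longrightarrow> x \<in> W \<Longrightarrow> y \<in> W" and "U \<subseteq> W"
  shows "cl E U \<subseteq> W"
proof -
  have "B \<subseteq> W" if "(force_step E)\<^sup>*\<^sup>* U B" for B
    using that
  proof (induction rule: rtranclp_induct)
    case base then show ?case using assms(2) by simp
  next
    case (step B B')
    then obtain v w where "v \<in> B" "nbhd E v - B = {w}" "B' = insert w B"
      unfolding force_step_def by blast
    then have "E v w" unfolding nbhd_def by blast
    then show ?case using step assms(1) \<open>v \<in> B\<close> \<open>B' = insert w B\<close> by blast
  qed
  then show ?thesis unfolding cl_def by blast
qed

lemma cl_base: "U \<subseteq> cl E U"
  unfolding cl_def by blast

lemma nbhd_prod: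
  assumes "i \<in> {0,1}"
  shows "nbhd (cart_prod_E E P2_E) (v, i) = {(v, 1 - i)} \<union> (nbhd E v \<times> {i})"
  using assms unfolding nbhd_def cart_prod_E_def P2_E_def
  by (auto simp: doubleton_eq_iff)

lemma lift_step:
  assumes "force_step E B B'"
  shows "(force_step (cart_prod_E E P2_E))\<^sup>*\<^sup>* (B \<times> {0,1}) (B' \<times> {0,1})"
proof -
  obtain v w where v: "v \<in> B" and nw: "nbhd E v - B = {w}" and B': "B' = insert w B"
    using assms unfolding force_step_def by blast
  let ?E = "cart_prod_E E P2_E"
  have wB: "w \<notin> B" using nw by blast
  have s1: "force_step ?E (B \<times> {0,1}) (insert (w,0) (B \<times> {0,1}))"
    unfolding force_step_def
  proof (intro bexI exI conjI)
    show "(v,0::nat) \<in> B \<times> {0,1}" using v by simp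
    show "nbhd ?E (v, 0) - B \<times> {0, 1} = {(w, 0)}"
      using nbhd_prod[of 0 E v] nw v by auto
  qed simp
  have s2: "force_step ?E (insert (w,0) (B \<times> {0,1})) (B' \<times> {0,1})"
    unfolding force_step_def
  proof (intro bexI exI conjI)
    show "(v,1::nat) \<in> insert (w,0) (B \<times> {0,1})" using v by simp
    show "nbhd ?E (v, 1) - insert (w,0) (B \<times> {0, 1}) = {(w, 1)}"
      using nbhd_prod[of 1 E v] nw v by auto
    show "B' \<times> {0, 1} = insert (w, 1) (insert (w, 0) (B \<times> {0, 1}))"
      using B' by auto
  qed
  show ?thesis using s1 s2 by simp
qed

lemma lift_steps:
  assumes "(force_step E)\<^sup>*\<^sup>* U B"
  shows "(force_step (cart_prod_E E P2_E))\<^sup>*\<^sup>* (U \<times> {0,1}) (B \<times> {0,1})"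
  using assms
proof (induction rule: rtranclp_induct)
  case base then show ?case by simp
next
  case (step B B')
  then show ?case using lift_step[OF step(2)] by (meson rtranclp_trans)
qed

lemma cl_prod: "cl (E :: 'a \<Rightarrow> 'a \<Rightarrow> bool) U \<times> {0::nat,1} \<subseteq> cl (cart_prod_E E P2_E) (U \<times> {0,1})"
proof
  fix p :: "'a \<times> nat" assume "p \<in> cl E U \<times> {0,1}"
  then obtain B where "(force_step E)\<^sup>*\<^sup>* U B" "p \<in> B \<times> {0,1}"
    unfolding cl_def by auto
  then show "p \<in> cl (cart_prod_E E P2_E) (U \<times> {0,1})"
    using lift_steps unfolding cl_def by blast
qed

lemma pd_exists:
  assumes "simple_graph V E"
  shows "power_dominating V E V"
proof -
  have edge: "\<And>x y. E x y \<Longrightarrow> x \<in> V \<and> y \<in> V" using assms unfolding simple_graph_def by blast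
  have cn: "closed_nbhd E V = V" unfolding closed_nbhd_def using edge by blast
  have "cl E V \<subseteq> V" by (rule cl_sub) (use edge in auto)
  then show ?thesis unfolding power_dominating_def cn using cl_base[of V E] by blast
qed

theorem mainTheorem12:
  fixes V :: "'a set" and E :: "'a \<Rightarrow> 'a \<Rightarrow> bool"
  assumes "simple_graph V E" and "connected_graph V E"
    and "power_domination_number V E = 1"
  shows "power_domination_number (cart_prod_V V P2_V) (cart_prod_E E P2_E) \<le> 2"
proof -
  have edge: "\<And>x y. E x y \<Longrightarrow> x \<in> V \<and> y \<in> V" using assms(1) unfolding simple_graph_def by blast
  have ex: "\<exists>k S. power_dominating V E S \<and> card S = k" using pd_exists[OF assms(1)] by blast
  have "\<exists>S. power_dominating V E S \<and> card S = 1"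
    using LeastI_ex[OF ex] assms(3) unfolding power_domination_number_def by simp
  then obtain v where pd: "power_dominating V E {v}" by (auto simp: card_1_singleton_iff)
  then have vV: "v \<in> V" and clV: "cl E (closed_nbhd E {v}) = V"
    unfolding power_dominating_def by auto
  let ?E = "cart_prod_E E P2_E"
  let ?S = "{(v,0::nat),(v,1)}"
  have cnS: "closed_nbhd ?E ?S = closed_nbhd E {v} \<times> {0,1}"
    unfolding closed_nbhd_def cart_prod_E_def P2_E_def
    by (auto simp: doubleton_eq_iff)
  have "cl ?E (closed_nbhd ?E ?S) \<subseteq> V \<times> {0,1}"
  proof (rule cl_sub)
    show "closed_nbhd ?E ?S \<subseteq> V \<times> {0, 1}" unfolding cnS unfolding closed_nbhd_def using vV edge by blast
    fix x y assume "?E x y" "x \<in> V \<times> {0,1}"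
    then show "y \<in> V \<times> {0,1}" unfolding cart_prod_E_def P2_E_def using edge
      by (cases x; cases y) (auto simp: doubleton_eq_iff)
  qed
  moreover have "V \<times> {0,1} \<subseteq> cl ?E (closed_nbhd ?E ?S)"
    using cl_prod[of E "closed_nbhd E {v}"] clV cnS by simp
  ultimately have "power_dominating (cart_prod_V V P2_V) ?E ?S"
    unfolding power_dominating_def cart_prod_V_def P2_V_def using vV by auto
  moreover have "card ?S = 2" by simp
  ultimately show ?thesis unfolding power_domination_number_def
    by (metis (mono_tags, lifting) Least_le)
qed

end
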